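(* Let $d\ge1$, $m,c>0$, and let $p,p_*,\hat p',\hat p'_*\in\mathbb{R}^d$ with associated energies $p_0=\sqrt{(mc)^2+|p|^2}$, $p_{0*}=\sqrt{(mc)^2+|p_*|^2}$, $\hat p_0'=\sqrt{(mc)^2+|\hat p'|^2}$, $\hat p_{0*}'=\sqrt{(mc)^2+|\hat p'_*|^2}$ satisfy the conservation laws \[ p+p_*=\hat p'+\hat p'_*\quad\text{and}\quad p_0+p_{0*}=\hat p_0'+\hat p_{0*}'. \] Then there exists $\omega\in S^{d-1}$ such that \[ \hat p'=\frac{p+p_*}{2}+\frac g2\Big(I_d+(\rho-1)\frac{v\otimes v}{|v|^2}\Big)\omega,\qquad \hat p'_*=\frac{p+p_*}{2}-\frac g2\Big(I_d+(\rho-1)\frac{v\otimes v}{|v|^2}\Big)\omega, \] and \[ \hat p_0'=\frac{p_0+p_{0*}}{2}+\frac g2\,\frac{p+p_*}{\sqrt s}\cdot\omega,\qquad \hat p_{0*}'=\frac{p_0+p_{0*}}{2}-\frac g2\,\frac{p+p_*}{\sqrt s}\cdot\omega. \]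
   Context: $s=(p_0+p_{0*})^2-|p+p_*|^2$, $g=\sqrt{|p-p_*|^2-(p_0-p_{0*})^2}$, $v=\frac{p+p_*}{p_0+p_{0*}}$, $\rho=\frac{p_0+p_{0*}}{\sqrt s}$; when $v=0$ (so $\rho=1$) the term $(\rho-1)\frac{v\otimes v}{|v|^2}$ is interpreted as $0$. *)

theory Defs
  imports "HOL-Analysis.Analysis"
begin

definition energy :: "real \<Rightarrow> real \<Rightarrow> 'a::real_normed_vector \<Rightarrow> real" where
  "energy m c p = sqrt ((m*c)^2 + (norm p)^2)"

definition rel_s :: "real \<Rightarrow> real \<Rightarrow> 'a::real_inner \<Rightarrow> 'a \<Rightarrow> real" where
  "rel_s m c p q = (energy m c p + energy m c q)^2 - (norm (p + q))^2"

definition rel_g :: "real \<Rightarrow> real \<Rightarrow> 'a::real_inner \<Rightarrow> 'a \<Rightarrow> real" where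
  "rel_g m c p q = sqrt ((norm (p - q))^2 - (energy m c p - energy m c q)^2)"

definition rel_v :: "real \<Rightarrow> real \<Rightarrow> 'a::real_inner \<Rightarrow> 'a \<Rightarrow> 'a" where
  "rel_v m c p q = (1 / (energy m c p + energy m c q)) *\<^sub>R (p + q)"

definition rel_rho :: "real \<Rightarrow> real \<Rightarrow> 'a::real_inner \<Rightarrow> 'a \<Rightarrow> real" where
  "rel_rho m c p q = (energy m c p + energy m c q) / sqrt (rel_s m c p q)"

definition boost_matrix :: "real \<Rightarrow> real ^ 'n \<Rightarrow> real ^ 'n ^ 'n" where
  "boost_matrix \<rho> v =
     (if v = 0 then mat 1
      else mat 1 + (\<chi> i j. (\<rho> - 1) * (v $ i * v $ j) / (norm v)^2))"

end

theory Submission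
  imports Defs
begin
lemma boost_mult: "boost_matrix r v *v x = x + ((r-1)/(norm v)^2 * (v \<bullet> x)) *\<^sub>R v"
proof (cases "v = 0")
  case True then show ?thesis by (simp add: boost_matrix_def)
next
  case False
  have "(\<chi> i j. (r - 1) * (v $ i * v $ j) / (norm v)^2) *v x = ((r-1)/(norm v)^2 * (v \<bullet> x)) *\<^sub>R v"
    by (simp add: vec_eq_iff matrix_vector_mult_def inner_vec_def sum_distrib_left sum_divide_distrib algebra_simps)
  then show ?thesis using False
    by (simp add: boost_matrix_def matrix_vector_mult_add_rdistrib)
qed

lemma energy_sq: "(energy m c p)^2 = (m*c)^2 + (norm p)^2"
  unfolding energy_def by simp

lemma energy_gt: "m > 0 \<Longrightarrow> c > 0 \<Longrightarrow> energy m c p > norm p"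
proof -
  assume "m > 0" "c > 0"
  then have "(m*c)^2 > 0" by simp
  then have "sqrt ((norm p)^2) < sqrt ((m*c)^2 + (norm p)^2)" by (intro real_sqrt_less_mono) simp
  then show ?thesis unfolding energy_def by simp
qed

theorem propositionA2:
  fixes m c :: real and p ps q qs :: "real ^ 'n"
  assumes "m > 0" and "c > 0"
    and "p + ps = q + qs"
    and "energy m c p + energy m c ps = energy m c q + energy m c qs"
  shows "\<exists>\<omega> :: real ^ 'n. norm \<omega> = 1 \<and>
     q = (1/2) *\<^sub>R (p + ps) + (rel_g m c p ps / 2) *\<^sub>R
           (boost_matrix (rel_rho m c p ps) (rel_v m c p ps) *v \<omega>) \<and>
     qs = (1/2) *\<^sub>R (p + ps) - (rel_g m c p ps / 2) *\<^sub>R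
           (boost_matrix (rel_rho m c p ps) (rel_v m c p ps) *v \<omega>) \<and>
     energy m c q = (energy m c p + energy m c ps) / 2
        + (rel_g m c p ps / 2) * (((1 / sqrt (rel_s m c p ps)) *\<^sub>R (p + ps)) \<bullet> \<omega>) \<and>
     energy m c qs = (energy m c p + energy m c ps) / 2
        - (rel_g m c p ps / 2) * (((1 / sqrt (rel_s m c p ps)) *\<^sub>R (p + ps)) \<bullet> \<omega>)"
proof -
  define k where "k = (m*c)^2"
  define a0 where "a0 = energy m c p"
  define b0 where "b0 = energy m c ps"
  define c0 where "c0 = energy m c q"
  define d0 where "d0 = energy m c qs"
  define E where "E = a0 + b0"
  define P where "P = p + ps"
  define u where "u = q - (1/2) *\<^sub>R P"
  define w where "w = c0 - E/2"
  define s where "s = rel_s m c p ps"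
  define g where "g = rel_g m c p ps"
  define r where "r = rel_rho m c p ps"
  define v where "v = rel_v m c p ps"
  define D where "D = (norm (p - ps))^2 - (a0 - b0)^2"
  have a0sq: "a0^2 = k + P' \<bullet> P'" if "P' = p" for P' using that energy_sq[of m c p]
    by (simp add: a0_def k_def power2_norm_eq_inner)
  have a0s: "a0^2 = k + p \<bullet> p" using a0sq by simp
  have b0s: "b0^2 = k + ps \<bullet> ps" using energy_sq[of m c ps] by (simp add: b0_def k_def power2_norm_eq_inner)
  have c0s: "c0^2 = k + q \<bullet> q" using energy_sq[of m c q] by (simp add: c0_def k_def power2_norm_eq_inner)
  have d0s: "d0^2 = k + qs \<bullet> qs" using energy_sq[of m c qs] by (simp add: d0_def k_def power2_norm_eq_inner)
  have Pq: "P = q + qs" using assms(3) P_def by simp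
  have Ec: "E = c0 + d0" using assms(4) by (simp add: E_def a0_def b0_def c0_def d0_def)
  have qs_eq: "qs = P - q" using Pq by simp
  have d0_eq: "d0 = E - c0" using Ec by simp
  have a0p: "a0 > norm p" using energy_gt[OF assms(1,2)] a0_def by simp
  have b0p: "b0 > norm ps" using energy_gt[OF assms(1,2)] b0_def by simp
  have EP: "E > norm P" unfolding P_def E_def using a0p b0p norm_triangle_ineq[of p ps] by linarith
  have Epos: "E > 0" using EP norm_ge_zero[of P] by linarith
  have s_eq: "s = E^2 - (norm P)^2" by (simp add: s_def rel_s_def E_def a0_def b0_def P_def)
  have spos: "s > 0" using EP s_eq
    by (simp add: norm_ge_zero power_strict_mono)
  have r_eq: "r = E / sqrt s" by (simp add: r_def rel_rho_def s_def E_def a0_def b0_def)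
  have v_eq: "v = (1/E) *\<^sub>R P" by (simp add: v_def rel_v_def E_def a0_def b0_def P_def)
  have g_eq: "g = sqrt D" by (simp add: g_def rel_g_def D_def a0_def b0_def)
  have rpos: "r > 0" using r_eq Epos spos by simp
  have vv: "v \<bullet> v = (P \<bullet> P) / E^2" using v_eq by (simp add: power2_eq_square)
  have rinv: "1 / r^2 = 1 - v \<bullet> v"
  proof -
    have r2: "r^2 = E^2/s" using r_eq spos by (simp add: power_divide)
    have "1/r^2 = s/E^2" using r2 by simp
    also have "... = 1 - v \<bullet> v" using s_eq vv Epos by (simp add: field_simps power2_norm_eq_inner)
    finally show ?thesis .
  qed
  have Ew: "E * w = P \<bullet> u"
  proof -
    have "c0^2 - d0^2 = q \<bullet> q - qs \<bullet> qs" using c0s d0s by simp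
    then show ?thesis unfolding w_def u_def d0_eq qs_eq
      by (simp add: algebra_simps inner_diff inner_add power2_eq_square inner_commute)
  qed
  have w_vu: "w = v \<bullet> u" using Ew Epos v_eq by (simp add: field_simps)
  have D_eq: "D = 4 * (u \<bullet> u - w^2)"
  proof -
    have "D = - 2*k + 2*a0*b0 - 2*(p \<bullet> ps)"
      unfolding D_def power2_norm_eq_inner using a0s b0s
      by (simp add: algebra_simps inner_diff inner_commute power2_eq_square)
    moreover have "E^2 - P \<bullet> P = 2*k + 2*a0*b0 - 2*(p \<bullet> ps)"
      unfolding E_def P_def using a0s b0s
      by (simp add: algebra_simps inner_add inner_commute power2_eq_square)
    moreover have "E^2 - P \<bullet> P = 2*k + 2*c0*d0 - 2*(q \<bullet> qs)"
      unfolding Ec Pq using c0s d0s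
      by (simp add: algebra_simps inner_add inner_commute power2_eq_square)
    moreover have "4 * (u \<bullet> u - w^2) = - 2*k + 2*c0*d0 - 2*(q \<bullet> qs)"
      unfolding u_def w_def Pq Ec using c0s d0s
      by (simp add: algebra_simps inner_add inner_diff inner_commute power2_eq_square)
    ultimately show ?thesis by linarith
  qed
  have PPE: "P \<bullet> P < E^2"
  proof -
    have "(norm P)^2 < E^2" using EP norm_ge_zero[of P] by (simp add: power_strict_mono)
    then show ?thesis by (simp add: power2_norm_eq_inner)
  qed
  have vlt: "v \<bullet> v < 1" using vv PPE Epos by (simp add: divide_less_eq)
  have wle: "w^2 \<le> (v \<bullet> v) * (u \<bullet> u)"
  proof -
    have "\<bar>w\<bar> \<le> norm v * norm u" using w_vu Cauchy_Schwarz_ineq2 by simp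
    then have "w^2 \<le> (norm v * norm u)^2" by (metis abs_ge_zero power2_abs power_mono)
    then show ?thesis by (simp add: power_mult_distrib power2_norm_eq_inner)
  qed
  have uu0: "u \<bullet> u \<ge> 0" by simp
  have "(v \<bullet> v) * (u \<bullet> u) \<le> u \<bullet> u" using vlt uu0 by (simp add: mult_left_le_one_le)
  then have Dnn: "D \<ge> 0" using D_eq wle by (smt (verit))
  have gsq: "g^2 = D" using g_eq Dnn by simp
  have gnn: "g \<ge> 0" using g_eq Dnn by simp
  show ?thesis
  proof (cases "g = 0")
    case True
    then have "D = 0" using gsq by simp
    then have "u \<bullet> u = w^2" using D_eq by simp
    then have "u \<bullet> u \<le> (v \<bullet> v) * (u \<bullet> u)" using wle by simp
    then have "(1 - v \<bullet> v) * (u \<bullet> u) \<le> 0" by (simp add: algebra_simps)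
    then have "u \<bullet> u \<le> 0" using vlt by (simp add: mult_le_0_iff)
    then have "u \<bullet> u = 0" using uu0 by linarith
    then have u0: "u = 0" by simp
    then have w0: "w = 0" using w_vu by simp
    have hq: "q = (1/2) *\<^sub>R (p + ps)" using u0 unfolding u_def P_def by simp
    have "qs = (1 - 1/2) *\<^sub>R (p + ps)" unfolding qs_eq hq P_def by (simp only: scaleR_diff_left scaleR_one)
    then have hqs: "qs = (1/2) *\<^sub>R (p + ps)" by simp
    have hc0: "energy m c q = (energy m c p + energy m c ps) / 2"
      using w0 unfolding w_def c0_def E_def a0_def b0_def by simp
    have hd0: "energy m c qs = (energy m c p + energy m c ps) / 2"
      using hc0 d0_eq unfolding c0_def d0_def E_def a0_def b0_def by simp
    have g0: "rel_g m c p ps = 0" using True g_def by simp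
    show ?thesis
      apply (rule exI[of _ "axis undefined (1::real)"])
      unfolding g0 hc0 hd0 using hq hqs by simp
  next
    case False
    then have gpos: "g > 0" using gnn by simp
    define b where "b = (1/r - 1) / (norm v)^2"
    define a where "a = (r - 1) / (norm v)^2"
    define om where "om = (2/g) *\<^sub>R (u + (b * (v \<bullet> u)) *\<^sub>R v)"
    have vu0: "v \<bullet> u = 0" if "v = 0" using that by simp
    have bvv: "b * (v \<bullet> v) = 1/r - 1" if "v \<noteq> 0"
      using that unfolding b_def by (simp add: power2_norm_eq_inner)
    have avv: "a * (v \<bullet> v) = r - 1" if "v \<noteq> 0"
      using that unfolding a_def by (simp add: power2_norm_eq_inner)
    have key1: "b + a + a * (b * (v \<bullet> v)) = 0" if "v \<noteq> 0"
    proof -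
      have "(b + a + a * (b * (v \<bullet> v))) * (v \<bullet> v) = (1/r - 1) + (r - 1) + (r - 1) * (1/r - 1)"
      proof -
        have "(b + a + a * (b * (v \<bullet> v))) * (v \<bullet> v) = b * (v \<bullet> v) + a * (v \<bullet> v) + (a * (v \<bullet> v)) * (b * (v \<bullet> v))"
          by (simp add: algebra_simps)
        then show ?thesis unfolding bvv[OF that] avv[OF that] by simp
      qed
      also have "... = 0" using rpos by (simp add: field_simps)
      finally show ?thesis using that by simp
    qed
    have key2: "2 * b + b * (b * (v \<bullet> v)) = -1" if "v \<noteq> 0"
    proof -
      have "(2 * b + b * (b * (v \<bullet> v))) * (v \<bullet> v) = 2 * (1/r - 1) + (1/r - 1)^2"
      proof -
        have "(2 * b + b * (b * (v \<bullet> v))) * (v \<bullet> v) = 2 * (b * (v \<bullet> v)) + (b * (v \<bullet> v))^2"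
          by (simp add: algebra_simps power2_eq_square)
        then show ?thesis unfolding bvv[OF that] by simp
      qed
      also have "... = 1/r^2 - 1" by (simp add: algebra_simps power2_eq_square)
      also have "... = (-1) * (v \<bullet> v)" using rinv by simp
      finally have "(2 * b + b * (b * (v \<bullet> v))) * (v \<bullet> v) = (-1) * (v \<bullet> v)" .
      moreover have "v \<bullet> v \<noteq> 0" using that by simp
      ultimately show ?thesis by (metis mult_right_cancel)
    qed
    have Bo: "boost_matrix r v *v om = (2/g) *\<^sub>R u"
    proof (cases "v = 0")
      case True then show ?thesis by (simp add: boost_matrix_def om_def)
    next
      case False
      have vom: "v \<bullet> om = (2/g) * ((v \<bullet> u) + b * (v \<bullet> u) * (v \<bullet> v))"
        by (simp add: om_def inner_add_right algebra_simps)
      have coef: "(2/g) * (b * (v \<bullet> u)) + a * (v \<bullet> om) = (2/g) * (v \<bullet> u) * (b + a + a * (b * (v \<bullet> v)))"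
        unfolding vom by (simp add: algebra_simps add_divide_distrib)
      have "boost_matrix r v *v om = om + (a * (v \<bullet> om)) *\<^sub>R v"
        by (simp add: boost_mult a_def)
      also have "... = (2/g) *\<^sub>R u + ((2/g) * (b * (v \<bullet> u)) + a * (v \<bullet> om)) *\<^sub>R v"
        unfolding om_def by (simp add: scaleR_add_right scaleR_add_left add.assoc)
      also have "... = (2/g) *\<^sub>R u" using coef key1[OF False] by simp
      finally show ?thesis .
    qed
    have no: "norm om = 1"
    proof -
      have "om \<bullet> om = (2/g)^2 * (u \<bullet> u + (v \<bullet> u)^2 * (2 * b + b * (b * (v \<bullet> v))))"
        by (simp add: om_def inner_add_left inner_add_right inner_commute algebra_simps power2_eq_square)
      also have "... = (2/g)^2 * (u \<bullet> u - w^2)"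
        using key2 vu0 w_vu by (cases "v = 0") auto
      also have "... = 1"
      proof -
        have "u \<bullet> u - w^2 = g^2/4" using D_eq gsq by simp
        then show ?thesis using gpos by (simp add: power_divide)
      qed
      finally show ?thesis by (simp add: norm_eq_sqrt_inner)
    qed
    have eo: "((1 / sqrt s) *\<^sub>R P) \<bullet> om = (2/g) * w"
    proof (cases "v = 0")
      case True
      then have "P = 0" using v_eq Epos by simp
      then show ?thesis using True vu0 w_vu by simp
    next
      case False
      have PE: "P = E *\<^sub>R v" using v_eq Epos by simp
      have "((1 / sqrt s) *\<^sub>R P) \<bullet> om = (E / sqrt s) * (2/g) * ((v \<bullet> u) * (1 + b * (v \<bullet> v)))"
        unfolding PE om_def by (simp add: inner_add_right algebra_simps)
      also have "... = r * (2/g) * (w * (1/r))" using bvv[OF False] r_eq w_vu by simp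
      also have "... = (2/g) * w" using rpos by simp
      finally show ?thesis .
    qed
    have hq: "q = (1/2) *\<^sub>R P + (g/2) *\<^sub>R (boost_matrix r v *v om)"
      unfolding Bo u_def using gpos by simp
    have hqs: "qs = (1/2) *\<^sub>R P - (g/2) *\<^sub>R (boost_matrix r v *v om)"
    proof -
      have "qs = (1 - 1/2) *\<^sub>R P - (g/2) *\<^sub>R (boost_matrix r v *v om)"
        unfolding qs_eq hq by (simp only: scaleR_diff_left scaleR_one) (simp add: algebra_simps)
      then show ?thesis by simp
    qed
    have gw: "(g/2) * ((2/g) * w) = w" using gpos by simp
    have hc0: "c0 = E/2 + (g/2) * (((1 / sqrt s) *\<^sub>R P) \<bullet> om)"
      unfolding eo gw using w_def by linarith
    have hd0: "d0 = E/2 - (g/2) * (((1 / sqrt s) *\<^sub>R P) \<bullet> om)"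
      unfolding eo gw using w_def d0_eq by linarith
    show ?thesis
      apply (rule exI[of _ om])
      using no hq hqs hc0 hd0
      unfolding g_def r_def v_def s_def P_def c0_def d0_def E_def a0_def b0_def
      by simp
  qed
qed
end
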